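(* Let $z\in\mathbb{C}$ with $|z|>1$ and let $t\ge 2$ be an integer. Then $$\lim_{n\to\infty}\frac{l_{2^{t-1}n+2^{t-2}}(z)}{l_{2^{t-1}n+2^{t-2}-1}(z)}=\frac{(z^2-1)F_{t-1}(z)}{F_{t-1}(z)-2}.$$ In particular $\lim_{n\to\infty} l_{2n+1}(z)/l_{2n}(z)=z^2+1$, $\lim_{n\to\infty} l_{4n+2}(z)/l_{4n+1}(z)=\frac{z^4+1}{z^2+1}$, and $\lim_{n\to\infty} l_{8n+4}(z)/l_{8n+3}(z)=\frac{z^8+1}{(z^4+1)(z^2+1)}$.
   Context: For $n\ge0$ and $z\in\mathbb{C}$, $p_n(z)=\frac12\sum_{i=0}^{n}\left(1-(-1)^{\binom{n}{i}}\right)z^i$, i.e. the sum of $z^i$ over those $i\in\{0,\dots,n\}$ with $\binom{n}{i}$ odd. The polynomial $p_{2n}(z)-1$ is divisible by $z^2$, and $l_n(z)=\frac{p_{2n}(z)-1}{z^2}$. $F_k(z)=z^{2^k}+1$. *)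

theory Defs
  imports Complex_Main
begin

definition p :: "nat \<Rightarrow> complex \<Rightarrow> complex" where
  "p n z = (\<Sum>i\<in>{i. i \<le> n \<and> odd (n choose i)}. z ^ i)"

text \<open>l_n(z) = (p_{2n}(z) - 1) / z^2 (a polynomial, since z^2 divides p_{2n} - 1).\<close>
definition l :: "nat \<Rightarrow> complex \<Rightarrow> complex" where
  "l n z = (p (2 * n) z - 1) / z ^ 2"

definition F :: "nat \<Rightarrow> complex \<Rightarrow> complex" where
  "F k z = z ^ (2 ^ k) + 1"

end

theory Submission
  imports Defs
begin


lemma par: "(2*n choose (2*i)) mod 2 = (n choose i) mod 2 \<and> (2*n choose (2*i+1)) mod 2 = 0"
proof (induction n arbitrary: i)
  case 0 then show ?case by (cases i) simp_all
next
  case (Suc n)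
  have e: "2 * Suc n = Suc (Suc (2*n))" by simp
  have A: "(2*Suc n choose (2*i)) mod 2 = (Suc n choose i) mod 2"
  proof (cases i)
    case 0 then show ?thesis by simp
  next
    case (Suc j)
    have "(2*Suc n choose (2*i)) = (2*n choose 2*j) + 2*(2*n choose (2*j+1)) + (2*n choose (2*Suc j))"
      unfolding e Suc by (simp add: binomial_Suc_Suc)
    hence "(2*Suc n choose (2*i)) mod 2 = ((2*n choose 2*j) mod 2 + (2*n choose (2*Suc j)) mod 2) mod 2"
      by presburger
    also have "\<dots> = ((n choose j) + (n choose Suc j)) mod 2" using Suc.IH[of j] Suc.IH[of "Suc j"]
      by (simp add: mod_add_eq)
    finally show ?thesis using Suc by simp
  qed
  have B: "(2*Suc n choose (2*i+1)) mod 2 = 0"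
  proof (cases i)
    case 0
    have "(2*Suc n choose (2*i+1)) = 2 * (2*n choose 0) + (2*n choose 1)" unfolding e 0
      by (simp add: binomial_Suc_Suc)
    then show ?thesis using Suc.IH[of 0] by simp
  next
    case (Suc j)
    have "(2*Suc n choose (2*i+1)) = (2*n choose (2*j+1)) + 2*(2*n choose (2*Suc j)) + (2*n choose (2*Suc j+1))"
      unfolding e Suc by (simp add: binomial_Suc_Suc)
    hence "(2*Suc n choose (2*i+1)) mod 2 = ((2*n choose (2*j+1)) mod 2 + (2*n choose (2*Suc j+1)) mod 2) mod 2"
      by presburger
    then show ?thesis using Suc.IH[of j] Suc.IH[of "Suc j"] by simp
  qed
  from A B show ?case by blast
qed

lemma odd_even: "odd (2*n choose (2*i)) \<longleftrightarrow> odd (n choose i)"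
  using par[of n i] by (simp add: odd_iff_mod_2_eq_one)
lemma odd_odd: "even (2*n choose (2*i+1))"
  using par[of n i] by presburger
lemma odd_s1: "odd (Suc (2*n) choose (2*i)) \<longleftrightarrow> odd (n choose i)"
proof (cases i)
  case 0 then show ?thesis by simp
next
  case (Suc j)
  have "Suc (2*n) choose (2*i) = (2*n choose (2*j+1)) + (2*n choose (2*i))" using Suc by (simp add: binomial_Suc_Suc)
  then show ?thesis using odd_odd[of n j] odd_even[of n i] by simp
qed
lemma odd_s2: "odd (Suc (2*n) choose (2*i+1)) \<longleftrightarrow> odd (n choose i)"
proof -
  have "Suc (2*n) choose (2*i+1) = (2*n choose (2*i)) + (2*n choose (2*i+1))" by (simp add: binomial_Suc_Suc)
  then show ?thesis using odd_odd[of n i] odd_even[of n i] by simp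
qed



lemma p0: "p 0 z = 1"
proof -
  have "{i. i \<le> (0::nat) \<and> odd (0 choose i)} = {0}" by auto
  then show ?thesis unfolding p_def by simp
qed

lemma p1: "p 1 z = 1 + z"
proof -
  have "{i. i \<le> (1::nat) \<and> odd (1 choose i)} = {0,1}" by (auto simp: le_Suc_eq)
  then show ?thesis unfolding p_def by simp
qed

lemma set_even: "{i. i \<le> 2*k \<and> odd (2*k choose i)} = (\<lambda>j. 2*j) ` {j. j \<le> k \<and> odd (k choose j)}"
proof (rule set_eqI, rule iffI)
  fix i assume "i \<in> {i. i \<le> 2*k \<and> odd (2*k choose i)}"
  hence h: "i \<le> 2*k" "odd (2*k choose i)" by auto
  have "even i" proof (rule ccontr)
    assume "odd i" then obtain j where "i = 2*j+1" by (metis oddE)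
    with h odd_odd show False by blast
  qed
  then obtain j where j: "i = 2*j" by blast
  with h odd_even show "i \<in> (\<lambda>j. 2*j) ` {j. j \<le> k \<and> odd (k choose j)}" by auto
next
  fix i assume "i \<in> (\<lambda>j. 2*j) ` {j. j \<le> k \<and> odd (k choose j)}"
  then obtain j where "i = 2*j" "j \<le> k" "odd (k choose j)" by auto
  then show "i \<in> {i. i \<le> 2*k \<and> odd (2*k choose i)}" using odd_even[of k j] by simp
qed

lemma set_odd: "{i. i \<le> Suc (2*k) \<and> odd (Suc (2*k) choose i)} =
   (\<lambda>j. 2*j) ` {j. j \<le> k \<and> odd (k choose j)} \<union> (\<lambda>j. 2*j+1) ` {j. j \<le> k \<and> odd (k choose j)}"
proof (rule set_eqI, rule iffI)
  fix i assume "i \<in> {i. i \<le> Suc (2*k) \<and> odd (Suc (2*k) choose i)}"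
  hence h: "i \<le> Suc (2*k)" "odd (Suc (2*k) choose i)" by auto
  show "i \<in> (\<lambda>j. 2*j) ` {j. j \<le> k \<and> odd (k choose j)} \<union> (\<lambda>j. 2*j+1) ` {j. j \<le> k \<and> odd (k choose j)}"
  proof (cases "even i")
    case True then obtain j where j: "i = 2*j" by blast
    with h odd_s1 show ?thesis by auto
  next
    case False then obtain j where j: "i = 2*j+1" by (metis oddE)
    with h odd_s2 show ?thesis by auto
  qed
next
  fix i assume "i \<in> (\<lambda>j. 2*j) ` {j. j \<le> k \<and> odd (k choose j)} \<union> (\<lambda>j. 2*j+1) ` {j. j \<le> k \<and> odd (k choose j)}"
  then obtain j where "i = 2*j \<or> i = 2*j+1" "j \<le> k" "odd (k choose j)" by auto
  then show "i \<in> {i. i \<le> Suc (2*k) \<and> odd (Suc (2*k) choose i)}" using odd_s1[of k j] odd_s2[of k j] by auto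
qed

lemma p_even: "p (2*k) z = p k (z^2)"
proof -
  have "p (2*k) z = (\<Sum>j\<in>{j. j \<le> k \<and> odd (k choose j)}. z^(2*j))"
    unfolding p_def set_even by (subst sum.reindex) (auto simp: inj_on_def)
  then show ?thesis unfolding p_def by (simp add: power_mult)
qed

lemma p_odd: "p (Suc (2*k)) z = (1+z) * p k (z^2)"
proof -
  let ?T = "{j. j \<le> k \<and> odd (k choose j)}"
  have fin: "finite ?T" by simp
  have "p (Suc (2*k)) z = (\<Sum>i\<in>(\<lambda>j. 2*j) ` ?T. z^i) + (\<Sum>i\<in>(\<lambda>j. 2*j+1) ` ?T. z^i)"
    unfolding p_def set_odd by (rule sum.union_disjoint) (auto, presburger)
  also have "\<dots> = (\<Sum>j\<in>?T. (z^2)^j) + (\<Sum>j\<in>?T. z * (z^2)^j)"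
    by (subst sum.reindex, simp add: inj_on_def, subst sum.reindex, simp add: inj_on_def)
       (simp add: power_mult[symmetric] mult.commute)
  also have "\<dots> = (1+z) * p k (z^2)" unfolding p_def
    by (simp add: sum_distrib_left sum.distrib algebra_simps)
  finally show ?thesis .
qed

lemma p_decomp: "b < 2^s \<Longrightarrow> p (2^s * a + b) z = p b z * p a (z^(2^s))"
proof (induction s arbitrary: b z)
  case 0 then show ?case by (simp add: p0 p1)
next
  case (Suc s)
  show ?case
  proof (cases "even b")
    case True then obtain c where c: "b = 2*c" by blast
    with Suc.prems have "c < 2^s" by simp
    have "p (2^Suc s * a + b) z = p (2*(2^s*a+c)) z" using c by (simp add: algebra_simps)
    also have "\<dots> = p c (z^2) * p a ((z^2)^(2^s))" by (simp only: p_even Suc.IH[OF \<open>c < 2^s\<close>])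
    also have "\<dots> = p b z * p a (z^(2^Suc s))" using c p_even by (simp add: power_mult[symmetric] mult.commute)
    finally show ?thesis .
  next
    case False then obtain c where c: "b = Suc (2*c)" by (metis oddE Suc_eq_plus1)
    with Suc.prems have "c < 2^s" by simp
    have "p (2^Suc s * a + b) z = p (Suc (2*(2^s*a+c))) z" using c by (simp add: algebra_simps)
    also have "\<dots> = (1+z) * (p c (z^2) * p a ((z^2)^(2^s)))" by (simp only: p_odd Suc.IH[OF \<open>c < 2^s\<close>])
    also have "\<dots> = p b z * p a (z^(2^Suc s))" using c p_odd by (simp add: power_mult[symmetric] mult.commute)
    finally show ?thesis .
  qed
qed

lemma p_pow2: "p (2^s) z = 1 + z^(2^s)"
proof (induction s arbitrary: z)
  case 0 then show ?case using p1 by simp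
next
  case (Suc s)
  have e: "2^Suc s = 2*(2::nat)^s" by simp
  have "p (2^Suc s) z = p (2^s) (z^2)" unfolding e by (rule p_even)
  also have "\<dots> = 1 + (z^2)^(2^s)" by (rule Suc.IH)
  also have "(z^2)^(2^s) = z^(2^Suc s)" unfolding e by (simp only: power_mult)
  finally show ?case .
qed

lemma p_pow2m1: "(z - 1) * p (2^s - 1) z = z^(2^s) - 1"
proof (induction s arbitrary: z)
  case 0 then show ?case by (simp add: p0 p1)
next
  case (Suc s)
  have x: "(1::nat) \<le> 2^s" by simp
  have e: "2^Suc s - 1 = Suc (2*(2^s - 1))" using x by (simp only: power_Suc)
  have "(z - 1) * p (2^Suc s - 1) z = (z - 1) * ((1+z) * p (2^s-1) (z^2))"
    unfolding e by (simp only: p_odd)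
  also have "\<dots> = (z^2 - 1) * p (2^s-1) (z^2)" by (simp add: power2_eq_square algebra_simps)
  also have "\<dots> = (z^2)^(2^s) - 1" by (rule Suc.IH)
  also have "(z^2)^(2^s) = z^(2^Suc s)" by (simp only: power_mult[symmetric] power_Suc)
  finally show ?case .
qed

lemma p_nonzero: "norm w > 1 \<Longrightarrow> p n w \<noteq> 0"
proof (induction n arbitrary: w rule: less_induct)
  case (less n)
  have w2: "norm (w^2) > 1" using less.prems by (simp add: norm_mult less_1_mult power2_eq_square)
  have "1 + w \<noteq> 0" proof assume "1 + w = 0" hence "w = -1" by (simp add: add_eq_0_iff2 minus_equation_iff) with less.prems show False by simp qed
  show ?case
  proof (cases "n = 0")
    case True then show ?thesis by (simp add: p0)
  next
    case False
    show ?thesis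
    proof (cases "even n")
      case True then obtain k where k: "n = 2*k" by blast
      with False have "k < n" by simp
      then show ?thesis using less.IH[OF _ w2] k p_even by simp
    next
      case odd: False then obtain k where k: "n = Suc (2*k)" by (metis oddE Suc_eq_plus1)
      hence "k < n" by simp
      then show ?thesis using less.IH[OF _ w2] k p_odd \<open>1+w \<noteq> 0\<close> by simp
    qed
  qed
qed



lemma big:
  assumes "norm u \<ge> 3" shows "norm u ^ a / 2 \<le> norm (p a u)"
proof -
  define r where "r = norm u"
  define S where "S = {i. i < a \<and> odd (a choose i)}"
  have fS: "finite S" unfolding S_def by simp
  have set: "{i. i \<le> a \<and> odd (a choose i)} = insert a S" unfolding S_def by auto
  have pe: "p a u = u^a + (\<Sum>i\<in>S. u^i)" unfolding p_def set using fS by (simp add: S_def)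
  have "norm (\<Sum>i\<in>S. u^i) \<le> (\<Sum>i\<in>S. r^i)"
    by (rule order_trans[OF norm_sum]) (simp add: norm_power r_def)
  also have "\<dots> \<le> (\<Sum>i<a. r^i)" by (rule sum_mono2) (auto simp: S_def r_def)
  finally have n1: "norm (\<Sum>i\<in>S. u^i) \<le> (\<Sum>i<a. r^i)" .
  have r3: "r \<ge> 3" using assms r_def by simp
  have nn: "0 \<le> (\<Sum>i<a. r^i)" using r3 by (intro sum_nonneg) simp
  have "r^a - 1 = (r - 1) * (\<Sum>i<a. r^i)" by (rule power_diff_1_eq)
  moreover have "2 * (\<Sum>i<a. r^i) \<le> (r - 1) * (\<Sum>i<a. r^i)" using r3 nn by (intro mult_right_mono) auto
  ultimately have "2 * (\<Sum>i<a. r^i) \<le> r^a - 1" by simp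
  hence n2: "norm (\<Sum>i\<in>S. u^i) \<le> r^a / 2" using n1 by simp
  have "norm (u^a) - norm (\<Sum>i\<in>S. u^i) \<le> norm (p a u)" unfolding pe by (rule norm_diff_ineq)
  moreover have "norm (u^a) = r^a" by (simp add: norm_power r_def)
  ultimately show ?thesis using n2 r_def by simp
qed

lemma inv_tends:
  assumes "norm w > 1" shows "(\<lambda>n. inverse (p n w)) \<longlonglongrightarrow> 0"
proof -
  obtain k where k: "3 < norm w ^ k" using real_arch_pow[OF assms] by blast
  define M :: nat where "M = 2^k"
  define u where "u = w^M"
  define r where "r = norm u"
  have "k \<le> M" unfolding M_def by (simp add: less_imp_le)
  hence "norm w ^ k \<le> norm w ^ M" using assms by (intro power_increasing) auto
  hence r3: "r \<ge> 3" using k unfolding r_def u_def by (simp add: norm_power)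
  have Mpos: "M > 0" unfolding M_def by simp
  define m0 where "m0 = Min ((\<lambda>b. norm (p b w)) ` {..<M})"
  have m0pos: "m0 > 0" unfolding m0_def using Mpos p_nonzero[OF assms]
    by (subst Min_gr_iff) auto
  have bound: "m0 * (r ^ (n div M) / 2) \<le> norm (p n w)" for n
  proof -
    have "n = M * (n div M) + n mod M" by simp
    hence "p n w = p (n mod M) w * p (n div M) u"
      using p_decomp[of "n mod M" k "n div M" w] Mpos unfolding M_def u_def by simp
    hence "norm (p n w) = norm (p (n mod M) w) * norm (p (n div M) u)" by (simp add: norm_mult)
    moreover have "m0 \<le> norm (p (n mod M) w)" unfolding m0_def using Mpos by (intro Min_le) auto
    moreover have "r ^ (n div M) / 2 \<le> norm (p (n div M) u)" using big r3 r_def by simp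
    moreover have "0 \<le> r ^ (n div M) / 2" using r3 by simp
    ultimately show ?thesis using mult_mono[of m0 "norm (p (n mod M) w)" "r ^ (n div M) / 2" "norm (p (n div M) u)"] by simp
  qed
  have b2: "norm (inverse (p n w)) \<le> (2/m0) * inverse r ^ (n div M)" for n
  proof -
    have pos: "0 < m0 * (r ^ (n div M) / 2)" using m0pos r3 by simp
    have "norm (inverse (p n w)) = inverse (norm (p n w))" by (simp add: norm_inverse)
    also have "\<dots> \<le> inverse (m0 * (r ^ (n div M) / 2))" using bound[of n] pos by (intro le_imp_inverse_le) auto
    also have "\<dots> = (2/m0) * inverse r ^ (n div M)" by (simp add: power_inverse field_simps)
    finally show ?thesis .
  qed
  have lim1: "(\<lambda>m. (2/m0) * inverse r ^ m) \<longlonglongrightarrow> 0"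
    using r3 by (intro tendsto_mult_right_zero LIMSEQ_power_zero) (auto simp: inverse_less_1_iff)
  have divlim: "filterlim (\<lambda>n. n div M) at_top sequentially"
  proof (subst filterlim_at_top, intro allI)
    fix Z :: nat
    have "\<forall>n\<ge>Z*M. Z \<le> n div M"
    proof (intro allI impI)
      fix n assume "Z*M \<le> n"
      hence "(Z*M) div M \<le> n div M" by (rule div_le_mono)
      thus "Z \<le> n div M" using Mpos by simp
    qed
    then show "eventually (\<lambda>n. Z \<le> n div M) sequentially" unfolding eventually_sequentially by blast
  qed
  have lim2: "(\<lambda>n. (2/m0) * inverse r ^ (n div M)) \<longlonglongrightarrow> 0"
    using filterlim_compose[OF lim1 divlim] by simp
  show ?thesis
  proof (rule tendsto_0_le[OF lim2, where K=1], intro always_eventually allI)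
    fix n show "norm (inverse (p n w)) \<le> norm ((2/m0) * inverse r ^ (n div M)) * 1"
    proof -
      have "0 \<le> (2/m0) * inverse r ^ (n div M)" using m0pos r3 by simp
      then have "norm ((2/m0) * inverse r ^ (n div M)) = (2/m0) * inverse r ^ (n div M)"
        by (simp only: real_norm_def abs_of_nonneg)
      then show ?thesis using b2[of n] by simp
    qed
  qed
qed



lemma pow_ne1: "norm (z::complex) > 1 \<Longrightarrow> k > 0 \<Longrightarrow> z^k \<noteq> 1"
proof
  assume "norm z > 1" "k > 0" "z^k = 1"
  hence "norm z ^ k = 1" by (metis norm_one norm_power)
  moreover have "norm z ^ k > 1" using \<open>norm z > 1\<close> \<open>k>0\<close> by (simp add: one_less_power)
  ultimately show False by simp
qed

lemma gen:
  assumes z: "norm z > 1"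
  shows "(\<lambda>n. l (2^(s+1)*n + 2^s) z / l (2^(s+1)*n + 2^s - 1) z)
           \<longlonglongrightarrow> (z^2 - 1) * F (s+1) z / (F (s+1) z - 2)"
proof -
  define w where "w = z^(2^(s+2))"
  have w: "norm w > 1" unfolding w_def using z by (simp add: norm_power one_less_power)
  define A where "A = 1 + z^(2^(s+1))"
  define B where "B = (z^(2^(s+1)) - 1) / (z^2 - 1)"
  have z0: "z \<noteq> 0" using z by auto
  have z2: "z^2 - 1 \<noteq> 0" using pow_ne1[OF z, of 2] by simp
  have zs: "z^(2^(s+1)) - 1 \<noteq> 0" using pow_ne1[OF z, of "2^(s+1)"] by simp
  have B0: "B \<noteq> 0" unfolding B_def using z2 zs by simp
  have pa: "p (2*(2^(s+1)*n + 2^s)) z = A * p n w" for n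
  proof -
    have "2*(2^(s+1)*n + 2^s) = 2^(s+2)*n + 2^(s+1)" by simp
    moreover have "(2::nat)^(s+1) < 2^(s+2)" by simp
    ultimately show ?thesis using p_decomp[of "2^(s+1)" "s+2" n z] p_pow2[of "s+1" z]
      unfolding A_def w_def by (simp add: mult.assoc)
  qed
  have pb: "p (2*(2^(s+1)*n + 2^s - 1)) z = B * p n w" for n
  proof -
    have x: "(1::nat) \<le> 2^s" by simp
    have gx: "2*(2*X*n + X - 1) = 4*X*n + 2*(X-1)" if "1 \<le> X" for X :: nat
      using that by (cases X) (simp_all add: algebra_simps)
    have "2*(2^(s+1)*n + 2^s - 1) = 2^(s+2)*n + 2*(2^s - 1)" using gx[OF x] by (simp add: mult.assoc)
    moreover have "2*(2^s - 1) < (2::nat)^(s+2)" using x by (simp, arith)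
    ultimately have "p (2*(2^(s+1)*n + 2^s - 1)) z = p (2*(2^s-1)) z * p n w"
      using p_decomp[of "2*(2^s - 1)" "s+2" n z] unfolding w_def by simp
    also have "p (2*(2^s-1)) z = p (2^s - 1) (z^2)" by (rule p_even)
    also have "\<dots> = B"
    proof -
      have "(z^2 - 1) * p (2^s - 1) (z^2) = (z^2)^(2^s) - 1" by (rule p_pow2m1)
      also have "(z^2)^(2^s) = z^(2^(s+1))" by (simp add: power_mult[symmetric])
      finally show ?thesis unfolding B_def using z2 by (simp add: field_simps)
    qed
    finally show ?thesis .
  qed
  have eq: "l (2^(s+1)*n + 2^s) z / l (2^(s+1)*n + 2^s - 1) z = (A - inverse (p n w)) / (B - inverse (p n w))" for n
  proof -
    have q: "p n w \<noteq> 0" by (rule p_nonzero[OF w])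
    have "l (2^(s+1)*n + 2^s) z / l (2^(s+1)*n + 2^s - 1) z = (A * p n w - 1) / (B * p n w - 1)"
      unfolding l_def pa pb using z0 by simp
    also have "\<dots> = ((A * p n w - 1) / p n w) / ((B * p n w - 1) / p n w)" using q by simp
    also have "\<dots> = (A - inverse (p n w)) / (B - inverse (p n w))" using q
      by (simp add: diff_divide_distrib inverse_eq_divide)
    finally show ?thesis .
  qed
  have lim: "(\<lambda>n. (A - inverse (p n w)) / (B - inverse (p n w))) \<longlonglongrightarrow> (A - 0) / (B - 0)"
    by (intro tendsto_intros inv_tends[OF w] B0) (simp add: B0)
  have fin: "(A - 0) / (B - 0) = (z^2 - 1) * F (s+1) z / (F (s+1) z - 2)"
    unfolding A_def B_def F_def using z2 zs by (simp add: field_simps)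
  show ?thesis unfolding eq using lim fin by simp
qed


theorem mainTheorem17:
  fixes z :: complex and t :: nat
  assumes "norm z > 1" and "t \<ge> 2"
  shows "((\<lambda>n. l (2^(t-1)*n + 2^(t-2)) z / l (2^(t-1)*n + 2^(t-2) - 1) z)
           \<longlonglongrightarrow> (z^2 - 1) * F (t-1) z / (F (t-1) z - 2)) \<and>
         ((\<lambda>n. l (2*n+1) z / l (2*n) z) \<longlonglongrightarrow> z^2 + 1) \<and>
         ((\<lambda>n. l (4*n+2) z / l (4*n+1) z) \<longlonglongrightarrow> (z^4 + 1) / (z^2 + 1)) \<and>
         ((\<lambda>n. l (8*n+4) z / l (8*n+3) z) \<longlonglongrightarrow> (z^8 + 1) / ((z^4 + 1) * (z^2 + 1)))"
proof (intro conjI)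
  have z: "norm z > 1" by (rule assms(1))
  have t1: "t - 2 + 1 = t - 1" using assms(2) by simp
  show "(\<lambda>n. l (2^(t-1)*n + 2^(t-2)) z / l (2^(t-1)*n + 2^(t-2) - 1) z)
           \<longlonglongrightarrow> (z^2 - 1) * F (t-1) z / (F (t-1) z - 2)"
    using gen[OF z, of "t-2"] unfolding t1 .
  have n2: "z^2 - 1 \<noteq> 0" using pow_ne1[OF z, of 2] by simp
  have n4: "z^4 - 1 \<noteq> 0" using pow_ne1[OF z, of 4] by simp
  have n8: "z^8 - 1 \<noteq> 0" using pow_ne1[OF z, of 8] by simp
  have f4: "z^4 - 1 = (z^2 - 1) * (z^2 + 1)" by (simp add: algebra_simps power2_eq_square power4_eq_xxxx)
  have f8: "z^8 - 1 = (z^4 - 1) * (z^4 + 1)"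
  proof -
    have "(z^4 - 1) * (z^4 + 1) = (z^4)^2 - 1" by (simp add: algebra_simps power2_eq_square)
    also have "(z^4)^2 = z^8" by (simp flip: power_mult)
    finally show ?thesis by simp
  qed
  have p2: "z^2 + 1 \<noteq> 0" using n4 f4 by auto
  have p4: "z^4 + 1 \<noteq> 0" using n8 f8 by auto
  have g0: "(\<lambda>n. l (2^(0+1)*n + 2^0) z / l (2^(0+1)*n + 2^0 - 1) z) \<longlonglongrightarrow> (z^2 - 1) * F (0+1) z / (F (0+1) z - 2)"
    by (rule gen[OF z])
  have g1: "(\<lambda>n. l (2^(1+1)*n + 2^1) z / l (2^(1+1)*n + 2^1 - 1) z) \<longlonglongrightarrow> (z^2 - 1) * F (1+1) z / (F (1+1) z - 2)"
    by (rule gen[OF z])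
  have g2: "(\<lambda>n. l (2^(2+1)*n + 2^2) z / l (2^(2+1)*n + 2^2 - 1) z) \<longlonglongrightarrow> (z^2 - 1) * F (2+1) z / (F (2+1) z - 2)"
    by (rule gen[OF z])
  have e0: "(z^2 - 1) * F (0+1) z / (F (0+1) z - 2) = z^2 + 1"
    using n2 by (simp add: F_def)
  have e1: "(z^2 - 1) * F (1+1) z / (F (1+1) z - 2) = (z^4 + 1) / (z^2 + 1)"
  proof -
    have F1: "F (1+1) z = z^4 + 1" by (simp add: F_def)
    have d: "z^4 + 1 - 2 = (z^2 - 1) * (z^2 + 1)" unfolding f4[symmetric] by simp
    show ?thesis unfolding F1 d by (rule mult_divide_mult_cancel_left[OF n2])
  qed
  have e2: "(z^2 - 1) * F (2+1) z / (F (2+1) z - 2) = (z^8 + 1) / ((z^4 + 1) * (z^2 + 1))"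
  proof -
    have F1: "F (2+1) z = z^8 + 1" by (simp add: F_def)
    have "z^8 + 1 - 2 = z^8 - 1" by simp
    also have "\<dots> = (z^4 - 1) * (z^4 + 1)" by (rule f8)
    also have "\<dots> = ((z^2 - 1) * (z^2 + 1)) * (z^4 + 1)" by (simp only: f4)
    also have "\<dots> = (z^2 - 1) * ((z^4 + 1) * (z^2 + 1))" by (simp only: ac_simps)
    finally have d: "z^8 + 1 - 2 = (z^2 - 1) * ((z^4 + 1) * (z^2 + 1))" .
    show ?thesis unfolding F1 d by (rule mult_divide_mult_cancel_left[OF n2])
  qed
  show "(\<lambda>n. l (2*n+1) z / l (2*n) z) \<longlonglongrightarrow> z^2 + 1" using g0 unfolding e0 by simp
  show "(\<lambda>n. l (4*n+2) z / l (4*n+1) z) \<longlonglongrightarrow> (z^4 + 1) / (z^2 + 1)" using g1 unfolding e1 by simp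
  show "(\<lambda>n. l (8*n+4) z / l (8*n+3) z) \<longlonglongrightarrow> (z^8 + 1) / ((z^4 + 1) * (z^2 + 1))" using g2 unfolding e2 by (simp add: add.commute)
qed

end
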